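(* Let $R,S$ be Polish spaces, $e:S\to R$ a Borel map, $f:S\to\mathbb{R}^d$ a Borel map, and $\lambda\in\mathcal{M}_+(S)$ with $f\in L^1(\lambda)$. Assume that $$\mathcal{H}\big(e_\sharp(f\lambda)\,\big|\,e_\sharp\lambda\big)=\mathcal{H}(f\lambda\,|\,\lambda).$$ Let $v:R\to\mathbb{R}^d$ be a version of the density of $e_\sharp(f\lambda)$ with respect to $e_\sharp\lambda$. Then $f=v\circ e$ $\lambda$-a.e.
   Context: $\mathcal{M}_+(S)$ denotes finite positive Borel measures. For $\mu$ a finite positive measure and $\nu$ an $\mathbb{R}^d$-valued measure with Lebesgue decomposition $\nu=\frac{d\nu}{d\mu}\mu+\nu^\perp$, $\nu^\perp\perp\mu$, set $\mathcal{H}(\nu|\mu):=\int\sqrt{1+|\frac{d\nu}{d\mu}|^2}\,d\mu+|\nu^\perp|$, where $|\nu^\perp|$ is the total variation (total mass) of $\nu^\perp$. *)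

theory Defs
  imports "HOL-Analysis.Analysis"
begin

text \<open>An R^d-valued (vector) measure is represented as a set function
  nu :: 'a set => 'd on the sets of a reference measure.\<close>

definition vec_density :: "'a measure \<Rightarrow> ('a \<Rightarrow> 'd::euclidean_space) \<Rightarrow> 'a set \<Rightarrow> 'd" where
  "vec_density M f = (\<lambda>A. LINT x:A|M. f x)"

definition vec_push :: "'a measure \<Rightarrow> ('a \<Rightarrow> 'b) \<Rightarrow> ('a set \<Rightarrow> 'd) \<Rightarrow> 'b set \<Rightarrow> 'd" where
  "vec_push M e nu = (\<lambda>B. nu (e -` B \<inter> space M))"

text \<open>Lebesgue decomposition nu = g mu + nu_perp, where nu_perp is
  concentrated on the mu-null set N, i.e. nu_perp(A) = nu(A \<inter> N).\<close>
definition is_leb_decomp ::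
  "'a measure \<Rightarrow> ('a set \<Rightarrow> 'd::euclidean_space) \<Rightarrow> ('a \<Rightarrow> 'd) \<Rightarrow> 'a set \<Rightarrow> bool" where
  "is_leb_decomp M nu g N \<longleftrightarrow>
     g \<in> borel_measurable M \<and> integrable M g \<and> N \<in> sets M \<and> emeasure M N = 0 \<and>
     (\<forall>A\<in>sets M. nu A = (LINT x:A|M. g x) + nu (A \<inter> N))"

definition total_variation_on ::
  "'a measure \<Rightarrow> ('a set \<Rightarrow> 'd::euclidean_space) \<Rightarrow> 'a set \<Rightarrow> real" where
  "total_variation_on M nu N =
     (SUP P\<in>{P. finite P \<and> disjoint P \<and> P \<subseteq> sets M}. \<Sum>A\<in>P. norm (nu (A \<inter> N)))"

definition Hfun :: "('a set \<Rightarrow> 'd::euclidean_space) \<Rightarrow> 'a measure \<Rightarrow> real" where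
  "Hfun nu M = (let (g, N) = (SOME (g, N). is_leb_decomp M nu g N) in
     (\<integral>x. sqrt (1 + (norm (g x))\<^sup>2) \<partial>M) + total_variation_on M nu N)"

end

theory Submission
  imports Defs
begin


lemma phi_key:
  fixes z w :: "'d::real_inner"
  shows "(1 + w \<bullet> z)\<^sup>2 + (norm (z - w))\<^sup>2 \<le> (1 + (norm z)\<^sup>2) * (1 + (norm w)\<^sup>2)"
proof -
  have cs: "(w \<bullet> z)\<^sup>2 \<le> (z \<bullet> z) * (w \<bullet> w)" using Cauchy_Schwarz_ineq[of w z] by (simp add: mult.commute)
  have "(norm (z - w))\<^sup>2 = z \<bullet> z - 2 * (w \<bullet> z) + w \<bullet> w"
    by (simp add: power2_norm_eq_inner inner_diff_left inner_diff_right inner_commute)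
  moreover have "(norm z)\<^sup>2 = z \<bullet> z" "(norm w)\<^sup>2 = w \<bullet> w" by (simp_all add: power2_norm_eq_inner)
  ultimately show ?thesis using cs by (simp add: power2_eq_square algebra_simps)
qed

lemma D_props:
  fixes z w :: "'d::real_inner"
  defines "D \<equiv> sqrt (1 + (norm z)\<^sup>2) - sqrt (1 + (norm w)\<^sup>2) - (w /\<^sub>R sqrt (1 + (norm w)\<^sup>2)) \<bullet> (z - w)"
  shows "0 \<le> D" and "D = 0 \<Longrightarrow> z = w"
proof -
  define a where "a = sqrt (1 + (norm z)\<^sup>2)"
  define b where "b = sqrt (1 + (norm w)\<^sup>2)"
  have bpos: "b > 0" unfolding b_def by (simp add: add_pos_nonneg)
  have apos: "a > 0" unfolding a_def by (simp add: add_pos_nonneg)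
  have b2: "b\<^sup>2 = 1 + w \<bullet> w" unfolding b_def by (simp add: power2_norm_eq_inner add_nonneg_nonneg)
  have i1: "(w /\<^sub>R b) \<bullet> (z - w) = (w \<bullet> z - w \<bullet> w) / b"
    by (simp only: inner_scaleR_left inner_diff_right) (simp add: divide_inverse mult.commute right_diff_distrib)
  have i2: "((w \<bullet> z - w \<bullet> w) / b) * b = w \<bullet> z - w \<bullet> w" using bpos by simp
  have "D * b = a * b - b * b - ((w \<bullet> z - w \<bullet> w) / b) * b"
    unfolding D_def a_def[symmetric] b_def[symmetric] i1 by (simp only: left_diff_distrib)
  also have "\<dots> = a * b - (1 + w \<bullet> z)" unfolding i2 using b2 by (simp add: power2_eq_square)
  finally have "D * b = a * b - (1 + w \<bullet> z)" .
  moreover have ab2: "(1 + w \<bullet> z)\<^sup>2 + (norm (z - w))\<^sup>2 \<le> (a * b)\<^sup>2"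
    unfolding a_def b_def using phi_key[of w z]
    by (simp add: power_mult_distrib add_nonneg_nonneg)
  ultimately have key: "D * b = a * b - (1 + w \<bullet> z)" by simp
  have ge: "1 + w \<bullet> z \<le> a * b"
  proof -
    have "(1 + w \<bullet> z)\<^sup>2 \<le> (a * b)\<^sup>2" using ab2 zero_le_power2[of "norm (z - w)"] by linarith
    moreover have "0 \<le> a * b" using apos bpos by simp
    ultimately show ?thesis by (rule power2_le_imp_le)
  qed
  have "0 \<le> D * b" using key ge by simp
  then show "0 \<le> D" using bpos by (simp add: zero_le_mult_iff)
  show "z = w" if "D = 0"
  proof (rule ccontr)
    assume "z \<noteq> w"
    then have "(norm (z - w))\<^sup>2 > 0" by simp
    then have "(1 + w \<bullet> z)\<^sup>2 < (a * b)\<^sup>2" using ab2 by linarith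
    moreover have "0 \<le> a * b" using apos bpos by simp
    ultimately have "1 + w \<bullet> z < a * b" by (rule power2_less_imp_less)
    then show False using key that by simp
  qed
qed



lemma Hfun_density:
  fixes M :: "'a measure" and nu :: "'a set \<Rightarrow> 'd::euclidean_space" and g0 :: "'a \<Rightarrow> 'd"
  assumes sf: "sigma_finite_measure M" and g0m: "g0 \<in> borel_measurable M" and g0i: "integrable M g0"
    and nu: "\<forall>A\<in>sets M. nu A = (LINT x:A|M. g0 x)"
  shows "Hfun nu M = (\<integral>x. sqrt (1 + (norm (g0 x))\<^sup>2) \<partial>M)"
proof -
  have dec0: "is_leb_decomp M nu g0 {}"
    unfolding is_leb_decomp_def using g0m g0i nu by (simp add: set_lebesgue_integral_def)
  obtain g N where gN: "(SOME (g, N). is_leb_decomp M nu g N) = (g, N)" by (metis surj_pair)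
  have "is_leb_decomp M nu g N"
  proof -
    have "\<exists>p. (case p of (g, N) \<Rightarrow> is_leb_decomp M nu g N)" using dec0 by auto
    from someI_ex[OF this] show ?thesis using gN by simp
  qed
  then have gm: "g \<in> borel_measurable M" and gi: "integrable M g" and Ns: "N \<in> sets M"
    and N0: "emeasure M N = 0" and dec: "\<forall>A\<in>sets M. nu A = (LINT x:A|M. g x) + nu (A \<inter> N)"
    unfolding is_leb_decomp_def by auto
  have nuN: "nu (A \<inter> N) = 0" if A: "A \<in> sets M" for A
  proof -
    have AN: "A \<inter> N \<in> sets M" using A Ns by auto
    have "AE x in M. x \<notin> N" using Ns N0 by (intro AE_not_in) (simp add: null_sets_def)
    then have "AE x in M. indicator (A \<inter> N) x *\<^sub>R g0 x = 0" by eventually_elim auto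
    then have "(LINT x:(A \<inter> N)|M. g0 x) = 0" unfolding set_lebesgue_integral_def
      by (simp add: integral_eq_zero_AE)
    then show ?thesis using nu AN by simp
  qed
  have "AE x in M. g x = g0 x"
  proof (rule sigma_finite_measure.density_unique_banach[OF sf gi g0i])
    fix A assume A: "A \<in> sets M"
    show "(LINT x:A|M. g x) = (LINT x:A|M. g0 x)" using dec nu nuN[OF A] A by simp
  qed
  then have int_eq: "(\<integral>x. sqrt (1 + (norm (g x))\<^sup>2) \<partial>M) = (\<integral>x. sqrt (1 + (norm (g0 x))\<^sup>2) \<partial>M)"
    using gm g0m by (intro integral_cong_AE) auto
  have tv: "total_variation_on M nu N = 0"
  proof -
    have "(\<lambda>P. \<Sum>A\<in>P. norm (nu (A \<inter> N))) ` {P. finite P \<and> disjoint P \<and> P \<subseteq> sets M} = {0}"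
    proof -
      have "{} \<in> {P. finite P \<and> disjoint P \<and> P \<subseteq> sets M}" by simp
      moreover have "(\<Sum>A\<in>P. norm (nu (A \<inter> N))) = 0" if "P \<subseteq> sets M" for P
        using that nuN by (intro sum.neutral) auto
      ultimately show ?thesis by force
    qed
    then show ?thesis unfolding total_variation_on_def by simp
  qed
  show ?thesis unfolding Hfun_def gN using int_eq tv by simp
qed

lemma push_orth:
  fixes e :: "'s \<Rightarrow> 'r" and M :: "'s measure" and g :: "'s \<Rightarrow> real" and h :: "'r \<Rightarrow> real"
  assumes e[measurable]: "e \<in> measurable M N" and gi: "integrable M g"
    and h[measurable]: "h \<in> borel_measurable N" and hb: "\<And>y. \<bar>h y\<bar> \<le> 1"
    and z: "\<And>B. B \<in> sets N \<Longrightarrow> (LINT x:(e -` B \<inter> space M)|M. g x) = 0"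
  shows "(\<integral>x. h (e x) * g x \<partial>M) = 0"
proof -
  have gm[measurable]: "g \<in> borel_measurable M" using gi by auto
  define P where "P = distr (density M (\<lambda>x. ennreal (max 0 (g x)))) N e"
  define Q where "Q = distr (density M (\<lambda>x. ennreal (max 0 (- g x)))) N e"
  have "P = Q"
  proof (rule measure_eqI)
    show "sets P = sets Q" unfolding P_def Q_def by simp
    fix B assume "B \<in> sets P"
    then have B: "B \<in> sets N" unfolding P_def by simp
    define A where "A = e -` B \<inter> space M"
    have A: "A \<in> sets M" unfolding A_def using B by measurable
    have ii: "integrable M (\<lambda>x. g x * indicator A x)" using A gi by (rule integrable_real_mult_indicator)
    have i0: "(\<integral>x. g x * indicator A x \<partial>M) = 0" using z[OF B] unfolding A_def[symmetric] set_lebesgue_integral_def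
      by (simp add: mult.commute)
    define X where "X = (\<integral>\<^sup>+x. ennreal (g x * indicator A x) \<partial>M)"
    define Y where "Y = (\<integral>\<^sup>+x. ennreal (- (g x * indicator A x)) \<partial>M)"
    have fin: "(\<integral>\<^sup>+x. ennreal (norm (g x * indicator A x)) \<partial>M) < \<infinity>"
      using ii by (simp add: integrable_iff_bounded)
    have X: "X < \<infinity>" unfolding X_def
      by (rule le_less_trans[OF _ fin], intro nn_integral_mono ennreal_leI) auto
    have Y: "Y < \<infinity>" unfolding Y_def
      by (rule le_less_trans[OF _ fin], intro nn_integral_mono ennreal_leI) auto
    have "enn2real X = enn2real Y" using real_lebesgue_integral_def[OF ii] i0 unfolding X_def Y_def by simp
    then have "ennreal (enn2real X) = ennreal (enn2real Y)" by simp
    then have XY: "X = Y" by (simp only: ennreal_enn2real[OF X[unfolded infinity_ennreal_def]] ennreal_enn2real[OF Y[unfolded infinity_ennreal_def]])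
    have "emeasure P B = (\<integral>\<^sup>+x\<in>A. ennreal (max 0 (g x)) \<partial>M)"
      unfolding P_def A_def using B by (simp add: emeasure_distr emeasure_density)
    also have "\<dots> = X" unfolding X_def
      by (intro nn_integral_cong) (auto split: split_indicator simp: max_def ennreal_neg)
    also have "\<dots> = Y" by (rule XY)
    also have "\<dots> = (\<integral>\<^sup>+x\<in>A. ennreal (max 0 (- g x)) \<partial>M)" unfolding Y_def
      by (intro nn_integral_cong) (auto split: split_indicator simp: max_def ennreal_neg)
    also have "\<dots> = emeasure Q B"
      unfolding Q_def A_def using B by (simp add: emeasure_distr emeasure_density)
    finally show "emeasure P B = emeasure Q B" .
  qed
  have "integral\<^sup>L P h = (\<integral>x. max 0 (g x) * h (e x) \<partial>M)"
    unfolding P_def by (simp add: integral_distr integral_density)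
  moreover have "integral\<^sup>L Q h = (\<integral>x. max 0 (- g x) * h (e x) \<partial>M)"
    unfolding Q_def by (simp add: integral_distr integral_density)
  ultimately have eq: "(\<integral>x. max 0 (g x) * h (e x) \<partial>M) = (\<integral>x. max 0 (- g x) * h (e x) \<partial>M)"
    using \<open>P = Q\<close> by simp
  have bnd: "norm (c * h (e x)) \<le> norm (g x)" if "\<bar>c\<bar> \<le> \<bar>g x\<bar>" for c x
  proof -
    have "\<bar>c\<bar> * \<bar>h (e x)\<bar> \<le> \<bar>c\<bar>" using hb[of "e x"] by (intro mult_left_le) auto
    then show ?thesis using that by (simp add: abs_mult)
  qed
  have i1: "integrable M (\<lambda>x. max 0 (g x) * h (e x))"
  proof (rule Bochner_Integration.integrable_bound[OF gi])
    show "(\<lambda>x. max 0 (g x) * h (e x)) \<in> borel_measurable M" by measurable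
    show "AE x in M. norm (max 0 (g x) * h (e x)) \<le> norm (g x)" by (intro AE_I2 bnd) auto
  qed
  have i2: "integrable M (\<lambda>x. max 0 (- g x) * h (e x))"
  proof (rule Bochner_Integration.integrable_bound[OF gi])
    show "(\<lambda>x. max 0 (- g x) * h (e x)) \<in> borel_measurable M" by measurable
    show "AE x in M. norm (max 0 (- g x) * h (e x)) \<le> norm (g x)" by (intro AE_I2 bnd) auto
  qed
  have "(\<integral>x. h (e x) * g x \<partial>M) = (\<integral>x. max 0 (g x) * h (e x) - max 0 (- g x) * h (e x) \<partial>M)"
    by (intro Bochner_Integration.integral_cong) (auto simp: max_def algebra_simps)
  also have "\<dots> = 0" using eq by (simp add: Bochner_Integration.integral_diff[OF i1 i2])
  finally show ?thesis .
qed


theorem lemma5p10: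
  fixes e :: "'s::polish_space \<Rightarrow> 'r::polish_space"
    and f :: "'s \<Rightarrow> 'd::euclidean_space"
    and v :: "'r \<Rightarrow> 'd"
    and lam :: "'s measure"
  assumes sets_lam: "sets lam = sets borel"
    and fin: "finite_measure lam"
    and e_meas: "e \<in> borel_measurable borel"
    and f_meas: "f \<in> borel_measurable borel"
    and f_int: "integrable lam f"
    and H_eq: "Hfun (vec_push lam e (vec_density lam f)) (distr lam borel e) = Hfun (vec_density lam f) lam"
    and v_meas: "v \<in> borel_measurable borel"
    and v_int: "integrable (distr lam borel e) v"
    and v_dens: "\<forall>B\<in>sets (borel :: 'r measure).
                   (LINT y:B|distr lam borel e. v y) = vec_push lam e (vec_density lam f) B"
  shows "AE x in lam. f x = v (e x)"
proof -
  interpret finite_measure lam by (rule fin)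
  have e_lam[measurable]: "e \<in> measurable lam borel"
    using e_meas measurable_cong_sets[OF sets_lam refl] by blast
  have f_lam[measurable]: "f \<in> borel_measurable lam"
    using f_meas measurable_cong_sets[OF sets_lam refl] by blast
  note v_meas[measurable]
  define phi :: "'d \<Rightarrow> real" where "phi z = sqrt (1 + (norm z)\<^sup>2)" for z
  have phi_m[measurable]: "phi \<in> borel_measurable borel" unfolding phi_def by measurable
  have phi_pos: "phi z > 0" for z unfolding phi_def by (simp add: add_pos_nonneg)
  have phi_le: "phi z \<le> 1 + norm z" for z
    unfolding phi_def by (rule real_sqrt_le_iff[THEN iffD2, of _ "(1 + norm z)\<^sup>2", simplified])
      (simp add: power2_eq_square algebra_simps)
  have norm_le_phi: "norm z \<le> phi z" for z
    unfolding phi_def by (rule real_le_rsqrt) simp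
  define H :: "'r \<Rightarrow> 'd" where "H y = v y /\<^sub>R phi (v y)" for y
  have H_m[measurable]: "H \<in> borel_measurable borel" unfolding H_def by measurable
  have H_b: "norm (H y) \<le> 1" for y
    using norm_le_phi[of "v y"] phi_pos[of "v y"] by (simp add: H_def field_simps)
  have ve_int: "integrable lam (\<lambda>x. v (e x))"
    using v_int by (simp add: integrable_distr_eq)
  define g where "g x = f x - v (e x)" for x
  have g_int: "integrable lam g" unfolding g_def using f_int ve_int by simp
  have g_m[measurable]: "g \<in> borel_measurable lam" unfolding g_def by measurable
  have g_zero: "(LINT x:(e -` B \<inter> space lam)|lam. g x) = 0" if B: "B \<in> sets (borel :: 'r measure)" for B
  proof -
    define A where "A = e -` B \<inter> space lam"
    have A: "A \<in> sets lam" unfolding A_def using B by measurable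
    have "(LINT x:A|lam. f x) = vec_push lam e (vec_density lam f) B"
      unfolding vec_push_def vec_density_def A_def by simp
    also have "\<dots> = (LINT y:B|distr lam borel e. v y)" using v_dens B by simp
    also have "\<dots> = (\<integral>x. indicator B (e x) *\<^sub>R v (e x) \<partial>lam)"
      unfolding set_lebesgue_integral_def using B by (simp add: integral_distr)
    also have "\<dots> = (LINT x:A|lam. v (e x))"
      unfolding set_lebesgue_integral_def A_def
      by (intro Bochner_Integration.integral_cong) (auto split: split_indicator)
    finally have eq: "(LINT x:A|lam. f x) = (LINT x:A|lam. v (e x))" .
    have "(LINT x:A|lam. g x) = (LINT x:A|lam. f x) - (LINT x:A|lam. v (e x))"
      unfolding g_def set_lebesgue_integral_def scaleR_diff_right
      by (rule Bochner_Integration.integral_diff; rule integrable_mult_indicator[OF A]; fact)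
    then show ?thesis using eq A_def by simp
  qed
  have orth: "(\<integral>x. H (e x) \<bullet> g x \<partial>lam) = 0"
  proof -
    have comp: "(\<integral>x. (H (e x) \<bullet> i) * (g x \<bullet> i) \<partial>lam) = 0" if i: "i \<in> Basis" for i
    proof (rule push_orth[where N=borel and h="\<lambda>y. H y \<bullet> i" and g="\<lambda>x. g x \<bullet> i" and e=e and M=lam])
      show "integrable lam (\<lambda>x. g x \<bullet> i)" using g_int by (rule integrable_inner_left)
      show "(\<lambda>y. H y \<bullet> i) \<in> borel_measurable borel" by measurable
      show "\<bar>H y \<bullet> i\<bar> \<le> 1" for y using Basis_le_norm[OF i, of "H y"] H_b[of y] by linarith
      fix B :: "'r set" assume B: "B \<in> sets borel"
      have "(LINT x:(e -` B \<inter> space lam)|lam. g x \<bullet> i) = (LINT x:(e -` B \<inter> space lam)|lam. g x) \<bullet> i"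
        unfolding set_lebesgue_integral_def
        by (subst integral_inner_left[symmetric])
           (auto intro!: integrable_mult_indicator g_int measurable_sets[OF e_lam B] simp: inner_scaleR_left)
      then show "(LINT x:(e -` B \<inter> space lam)|lam. g x \<bullet> i) = 0" using g_zero[OF B] by simp
    qed (rule e_lam)
    have ci: "integrable lam (\<lambda>x. (H (e x) \<bullet> i) * (g x \<bullet> i))" if i: "i \<in> Basis" for i
    proof (rule Bochner_Integration.integrable_bound[OF g_int])
      show "(\<lambda>x. (H (e x) \<bullet> i) * (g x \<bullet> i)) \<in> borel_measurable lam" by measurable
      show "AE x in lam. norm ((H (e x) \<bullet> i) * (g x \<bullet> i)) \<le> norm (g x)"
      proof (intro AE_I2)
        fix x
        have "\<bar>H (e x) \<bullet> i\<bar> \<le> 1" using Basis_le_norm[OF i, of "H (e x)"] H_b[of "e x"] by linarith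
        moreover have "\<bar>g x \<bullet> i\<bar> \<le> norm (g x)" using Basis_le_norm[OF i] by blast
        ultimately show "norm ((H (e x) \<bullet> i) * (g x \<bullet> i)) \<le> norm (g x)"
          by (simp add: abs_mult) (metis abs_ge_zero mult_mono mult_1 order_trans)
      qed
    qed
    have "(\<integral>x. H (e x) \<bullet> g x \<partial>lam) = (\<integral>x. (\<Sum>i\<in>Basis. (H (e x) \<bullet> i) * (g x \<bullet> i)) \<partial>lam)"
      by (intro Bochner_Integration.integral_cong refl) (rule euclidean_inner)
    also have "\<dots> = (\<Sum>i\<in>Basis. \<integral>x. (H (e x) \<bullet> i) * (g x \<bullet> i) \<partial>lam)"
      by (rule Bochner_Integration.integral_sum) (rule ci)
    also have "\<dots> = 0" using comp by simp
    finally show ?thesis .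
  qed
  have sf_lam: "sigma_finite_measure lam" by unfold_locales
  have fin_d: "finite_measure (distr lam borel e)" by (rule finite_measure_distr) simp
  have H1: "Hfun (vec_density lam f) lam = (\<integral>x. phi (f x) \<partial>lam)"
    unfolding phi_def
    by (rule Hfun_density[OF sf_lam f_lam f_int]) (simp add: vec_density_def)
  have H2: "Hfun (vec_push lam e (vec_density lam f)) (distr lam borel e) = (\<integral>y. phi (v y) \<partial>distr lam borel e)"
    unfolding phi_def
  proof (rule Hfun_density)
    show "sigma_finite_measure (distr lam borel e)"
      using fin_d unfolding finite_measure_def by blast
    show "v \<in> borel_measurable (distr lam borel e)" by simp
    show "integrable (distr lam borel e) v" by (rule v_int)
    show "\<forall>A\<in>sets (distr lam borel e). vec_push lam e (vec_density lam f) A = (LINT x:A|distr lam borel e. v x)"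
      using v_dens by simp
  qed
  have H3: "(\<integral>y. phi (v y) \<partial>distr lam borel e) = (\<integral>x. phi (v (e x)) \<partial>lam)"
    by (simp add: integral_distr)
  have phi_eq: "(\<integral>x. phi (v (e x)) \<partial>lam) = (\<integral>x. phi (f x) \<partial>lam)"
    using H_eq H1 H2 H3 by simp
  have pf_int: "integrable lam (\<lambda>x. phi (f x))"
  proof (rule Bochner_Integration.integrable_bound[of lam "\<lambda>x. 1 + norm (f x)"])
    show "integrable lam (\<lambda>x. 1 + norm (f x))" using f_int by simp
  qed (auto intro!: AE_I2 simp: phi_le order_trans[OF _ phi_le] abs_of_pos phi_pos)
  have pv_int: "integrable lam (\<lambda>x. phi (v (e x)))"
  proof (rule Bochner_Integration.integrable_bound[of lam "\<lambda>x. 1 + norm (v (e x))"])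
    show "integrable lam (\<lambda>x. 1 + norm (v (e x)))" using ve_int by simp
  qed (auto intro!: AE_I2 simp: phi_le abs_of_pos phi_pos)
  have hg_int: "integrable lam (\<lambda>x. H (e x) \<bullet> g x)"
  proof (rule Bochner_Integration.integrable_bound[OF g_int])
    show "(\<lambda>x. H (e x) \<bullet> g x) \<in> borel_measurable lam" by measurable
    show "AE x in lam. norm (H (e x) \<bullet> g x) \<le> norm (g x)"
    proof (intro AE_I2)
      fix x
      have "norm (H (e x) \<bullet> g x) \<le> norm (H (e x)) * norm (g x)" using Cauchy_Schwarz_ineq2 by simp
      also have "\<dots> \<le> norm (g x)" using H_b[of "e x"] by (simp add: mult_left_le_one_le)
      finally show "norm (H (e x) \<bullet> g x) \<le> norm (g x)" .
    qed
  qed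
  define D where "D x = phi (f x) - phi (v (e x)) - H (e x) \<bullet> g x" for x
  have D_int: "integrable lam D" unfolding D_def using pf_int pv_int hg_int by simp
  have D0: "integral\<^sup>L lam D = 0"
    unfolding D_def using pf_int pv_int hg_int orth phi_eq by simp
  have D_nn: "0 \<le> D x" for x
    unfolding D_def g_def H_def phi_def by (rule D_props(1))
  have "AE x in lam. D x = 0"
    using integral_nonneg_eq_0_iff_AE[OF D_int] D_nn D0 by simp
  then show ?thesis
  proof eventually_elim
    case (elim x)
    then show ?case using D_props(2)[of "f x" "v (e x)"] unfolding D_def g_def H_def phi_def by simp
  qed
qed

end
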